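(* Let $\delta\ge1$ and suppose $G=(V,E,w)$ is a $\delta$-perturbation of a graph $G^*=(V,E,w^* )$ with perfect HC-structure. Let $\mathcal{R}$ be the set of constraints $\{i,j|k\}$, over all triples of distinct indices $i,j,k$, such that $w_{ij}>\delta^2\max\{w_{ik},w_{jk}\}$. Then there exists a binary HC-tree for $V$ that is consistent with every constraint in $\mathcal{R}$.
   Context: $G$ is a $\delta$-perturbation of $G^*$ if $\frac1\delta w(e)\le w^*(e)\le\delta w(e)$ for all $e\in E$; weights are symmetric, nonnegative, and $0$ on non-edges. An HC-tree for $V=\{v_1,\dots,v_n\}$ is a rooted tree with leaf set $V$. A tree $T$ is consistent with constraint $\{i,j|k\}$ if $\mathrm{LCA}(v_i,v_j)$ is a proper descendant of $\mathrm{LCA}(v_i,v_j,v_k)$ (relation $\{i,j|k\}$ holds in $T$); relation $\{i|j|k\}$ holds if $\mathrm{LCA}(v_i,v_j)=\mathrm{LCA}(v_j,v_k)=\mathrm{LCA}(v_i,v_j,v_k)$. Triplet cost $c_T(i,j,k)$: $w_{ik}+w_{jk}$ if $\{i,j|k\}$; $w_{ij}+w_{jk}$ if $\{i,k|j\}$; $w_{ij}+w_{ik}$ if $\{j,k|i\}$; $w_{ij}+w_{jk}+w_{ik}$ if $\{i|j|k\}$. $\mathrm{TC}(T)=\sum c_T(i,j,k)$, $\mathrm{BC}=\sum\min\{w_{ij}+w_{ik},w_{ij}+w_{jk},w_{ik}+w_{jk}\}$ over unordered triples of distinct indices; $\rho(T)=\mathrm{TC}(T)/\mathrm{BC}$ (with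 $0/0=1$, $x/0=+\infty$ for $x>0$), $\rho^*=\min_T\rho(T)$; perfect HC-structure means $\rho^*=1$ (computed with weights $w^*$ for $G^*$). *)

theory Defs
  imports Complex_Main "HOL-Library.Extended_Real"
begin

text \<open>Rooted trees whose leaves are labelled by vertex indices (vertex v_i is index i).\<close>
datatype 'a rtree = Leaf 'a | Node "'a rtree list"

fun leaves_list :: "'a rtree \<Rightarrow> 'a list" where
  "leaves_list (Leaf a) = [a]"
| "leaves_list (Node ts) = concat (map leaves_list ts)"

definition leaves :: "'a rtree \<Rightarrow> 'a set" where
  "leaves t = set (leaves_list t)"

text \<open>All nodes of a tree, each node identified with the subtree rooted at it.\<close>
fun subtrees :: "'a rtree \<Rightarrow> 'a rtree set" where
  "subtrees (Leaf a) = {Leaf a}"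
| "subtrees (Node ts) = insert (Node ts) (\<Union> (subtrees ` set ts))"

text \<open>Every internal node has at least one child (so all leaves are labelled).\<close>
fun no_empty_node :: "'a rtree \<Rightarrow> bool" where
  "no_empty_node (Leaf a) = True"
| "no_empty_node (Node ts) = (ts \<noteq> [] \<and> (\<forall>t\<in>set ts. no_empty_node t))"

fun is_binary :: "'a rtree \<Rightarrow> bool" where
  "is_binary (Leaf a) = True"
| "is_binary (Node ts) = (length ts = 2 \<and> (\<forall>t\<in>set ts. is_binary t))"

definition hc_tree :: "nat \<Rightarrow> nat rtree \<Rightarrow> bool" where
  "hc_tree n T \<longleftrightarrow> no_empty_node T \<and> distinct (leaves_list T) \<and> leaves T = {..<n}"

definition descendant :: "'a rtree \<Rightarrow> 'a rtree \<Rightarrow> bool" where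
  "descendant u v \<longleftrightarrow> u \<in> subtrees v"

definition LCA :: "'a rtree \<Rightarrow> 'a set \<Rightarrow> 'a rtree" where
  "LCA T S = (THE u. u \<in> subtrees T \<and> S \<subseteq> leaves u \<and>
      (\<forall>v\<in>subtrees T. S \<subseteq> leaves v \<longrightarrow> descendant u v))"

text \<open>Relation {i,j|k}: LCA(i,j) is a proper descendant of LCA(i,j,k).\<close>
definition rel3 :: "'a rtree \<Rightarrow> 'a \<Rightarrow> 'a \<Rightarrow> 'a \<Rightarrow> bool" where
  "rel3 T i j k \<longleftrightarrow> descendant (LCA T {i,j}) (LCA T {i,j,k}) \<and> LCA T {i,j} \<noteq> LCA T {i,j,k}"

definition relstar :: "'a rtree \<Rightarrow> 'a \<Rightarrow> 'a \<Rightarrow> 'a \<Rightarrow> bool" where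
  "relstar T i j k \<longleftrightarrow> LCA T {i,j} = LCA T {j,k} \<and> LCA T {j,k} = LCA T {i,j,k}"

definition triplet_cost :: "'a rtree \<Rightarrow> ('a \<Rightarrow> 'a \<Rightarrow> real) \<Rightarrow> 'a \<Rightarrow> 'a \<Rightarrow> 'a \<Rightarrow> real" where
  "triplet_cost T w i j k =
     (if rel3 T i j k then w i k + w j k
      else if rel3 T i k j then w i j + w j k
      else if rel3 T j k i then w i j + w i k
      else w i j + w j k + w i k)"

text \<open>Unordered triples of distinct indices of V = {0..<n}, listed as i<j<k.\<close>
definition triples :: "nat \<Rightarrow> (nat \<times> nat \<times> nat) set" where
  "triples n = {(i,j,k). i < j \<and> j < k \<and> k < n}"

definition TC :: "nat \<Rightarrow> nat rtree \<Rightarrow> (nat \<Rightarrow> nat \<Rightarrow> real) \<Rightarrow> real" where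
  "TC n T w = (\<Sum>(i,j,k)\<in>triples n. triplet_cost T w i j k)"

definition BC :: "nat \<Rightarrow> (nat \<Rightarrow> nat \<Rightarrow> real) \<Rightarrow> real" where
  "BC n w = (\<Sum>(i,j,k)\<in>triples n. min (w i j + w i k) (min (w i j + w j k) (w i k + w j k)))"

definition rho :: "nat \<Rightarrow> nat rtree \<Rightarrow> (nat \<Rightarrow> nat \<Rightarrow> real) \<Rightarrow> ereal" where
  "rho n T w = (if BC n w = 0 then (if TC n T w = 0 then 1 else \<infinity>)
                else ereal (TC n T w / BC n w))"

definition rho_star :: "nat \<Rightarrow> (nat \<Rightarrow> nat \<Rightarrow> real) \<Rightarrow> ereal" where
  "rho_star n w = (INF T\<in>{T. hc_tree n T}. rho n T w)"

definition perfect_HC :: "nat \<Rightarrow> (nat \<Rightarrow> nat \<Rightarrow> real) \<Rightarrow> bool" where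
  "perfect_HC n w \<longleftrightarrow> rho_star n w = 1"

definition weighted_graph :: "nat \<Rightarrow> (nat \<times> nat) set \<Rightarrow> (nat \<Rightarrow> nat \<Rightarrow> real) \<Rightarrow> bool" where
  "weighted_graph n E w \<longleftrightarrow> E \<subseteq> {..<n} \<times> {..<n} \<and> (\<forall>i j. (i,j) \<in> E \<longrightarrow> (j,i) \<in> E)
     \<and> (\<forall>i<n. \<forall>j<n. w i j = w j i \<and> 0 \<le> w i j \<and> ((i,j) \<notin> E \<longrightarrow> w i j = 0))"

definition perturbation :: "real \<Rightarrow> (nat \<times> nat) set \<Rightarrow> (nat \<Rightarrow> nat \<Rightarrow> real) \<Rightarrow> (nat \<Rightarrow> nat \<Rightarrow> real) \<Rightarrow> bool" where
  "perturbation \<delta> E w wstar \<longleftrightarrow> (\<forall>(i,j)\<in>E. w i j / \<delta> \<le> wstar i j \<and> wstar i j \<le> \<delta> * w i j)"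

end

theory Submission
  imports Defs "HOL-Library.FuncSet"
begin

lemma sub_self: "t \<in> subtrees t"
  by (cases t) auto

lemma sub_trans: "u \<in> subtrees v \<Longrightarrow> v \<in> subtrees w \<Longrightarrow> u \<in> subtrees w"
  by (induction w) auto

lemma sub_size: "u \<in> subtrees v \<Longrightarrow> u = v \<or> size u < size v"
proof (induction v)
  case (Leaf x) then show ?case by auto
next
  case (Node ts)
  show ?case
  proof (cases "u = Node ts")
    case False
    then obtain t where t: "t \<in> set ts" "u \<in> subtrees t" using Node.prems by auto
    have "size t < size (Node ts)" using size_list_estimation'[OF t(1), of "size t" size] by simp
    with Node.IH[OF t] show ?thesis by auto
  qed simp
qed

lemma desc_antisym: "descendant u v \<Longrightarrow> descendant v u \<Longrightarrow> u = v"
  unfolding descendant_def by (metis sub_size less_asym)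

lemma leaves_sub: "u \<in> subtrees v \<Longrightarrow> leaves u \<subseteq> leaves v"
  by (induction v) (auto simp: leaves_def)

lemma child_disj: "distinct (concat (map leaves_list ts)) \<Longrightarrow> t \<in> set ts \<Longrightarrow> t' \<in> set ts
  \<Longrightarrow> x \<in> set (leaves_list t) \<Longrightarrow> x \<in> set (leaves_list t') \<Longrightarrow> t = t'"
  by (induction ts) auto

definition wft where "wft t \<longleftrightarrow> no_empty_node t \<and> distinct (leaves_list t)"

lemma lca_ex: "wft T \<Longrightarrow> S \<noteq> {} \<Longrightarrow> S \<subseteq> leaves T \<Longrightarrow> \<exists>u. u \<in> subtrees T \<and> S \<subseteq> leaves u \<and>
   (\<forall>v\<in>subtrees T. S \<subseteq> leaves v \<longrightarrow> descendant u v)"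
proof (induction T)
  case (Leaf x)
  then show ?case by (auto simp: descendant_def)
next
  case (Node ts)
  have d: "distinct (concat (map leaves_list ts))" using Node.prems by (simp add: wft_def)
  show ?case
  proof (cases "\<exists>t\<in>set ts. S \<subseteq> leaves t")
    case True
    then obtain t where t: "t \<in> set ts" "S \<subseteq> leaves t" by auto
    have "wft t" using Node.prems t(1) by (auto simp: wft_def distinct_concat_iff)
    from Node.IH[OF t(1) this Node.prems(2) t(2)] obtain u where
      u: "u \<in> subtrees t" "S \<subseteq> leaves u" "\<forall>v\<in>subtrees t. S \<subseteq> leaves v \<longrightarrow> descendant u v" by blast
    show ?thesis
    proof (intro exI conjI ballI impI)
      show "u \<in> subtrees (Node ts)" using u(1) t(1) by auto
      show "S \<subseteq> leaves u" by fact
      fix v assume v: "v \<in> subtrees (Node ts)" "S \<subseteq> leaves v"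
      show "descendant u v"
      proof (cases "v = Node ts")
        case True then show ?thesis using u(1) t(1) by (auto simp: descendant_def)
      next
        case False
        then obtain t' where t': "t' \<in> set ts" "v \<in> subtrees t'" using v by auto
        obtain x where "x \<in> S" using Node.prems(2) by auto
        then have "x \<in> set (leaves_list t)" "x \<in> set (leaves_list t')"
          using t(2) v(2) leaves_sub[OF t'(2)] by (auto simp: leaves_def)
        then have "t' = t" using child_disj[OF d t'(1) t(1)] by auto
        then show ?thesis using u(3) t' v by auto
      qed
    qed
  next
    case False
    show ?thesis
    proof (intro exI conjI ballI impI)
      show "Node ts \<in> subtrees (Node ts)" by simp
      show "S \<subseteq> leaves (Node ts)" by fact
      fix v assume v: "v \<in> subtrees (Node ts)" "S \<subseteq> leaves v"
      show "descendant (Node ts) v"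
      proof (cases "v = Node ts")
        case True then show ?thesis by (simp add: descendant_def)
      next
        case c: False
        then obtain t' where t': "t' \<in> set ts" "v \<in> subtrees t'" using v by auto
        then show ?thesis using False leaves_sub[OF t'(2)] v(2) by blast
      qed
    qed
  qed
qed

lemma lca_spec:
  assumes "wft T" "S \<noteq> {}" "S \<subseteq> leaves T"
  shows "LCA T S \<in> subtrees T \<and> S \<subseteq> leaves (LCA T S) \<and>
   (\<forall>v\<in>subtrees T. S \<subseteq> leaves v \<longrightarrow> descendant (LCA T S) v)"
  unfolding LCA_def
proof (rule theI')
  show "\<exists>!u. u \<in> subtrees T \<and> S \<subseteq> leaves u \<and> (\<forall>v\<in>subtrees T. S \<subseteq> leaves v \<longrightarrow> descendant u v)"
    using lca_ex[OF assms] desc_antisym by blast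
qed

lemma rel3_iff:
  assumes "wft T" "i \<in> leaves T" "j \<in> leaves T" "k \<in> leaves T"
  shows "rel3 T i j k \<longleftrightarrow> (\<exists>s\<in>subtrees T. i \<in> leaves s \<and> j \<in> leaves s \<and> k \<notin> leaves s)"
proof -
  have A: "LCA T {i,j} \<in> subtrees T \<and> {i,j} \<subseteq> leaves (LCA T {i,j}) \<and>
   (\<forall>v\<in>subtrees T. {i,j} \<subseteq> leaves v \<longrightarrow> descendant (LCA T {i,j}) v)"
    by (rule lca_spec) (use assms in auto)
  have B: "LCA T {i,j,k} \<in> subtrees T \<and> {i,j,k} \<subseteq> leaves (LCA T {i,j,k}) \<and>
   (\<forall>v\<in>subtrees T. {i,j,k} \<subseteq> leaves v \<longrightarrow> descendant (LCA T {i,j,k}) v)"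
    by (rule lca_spec) (use assms in auto)
  show ?thesis
  proof
    assume r: "rel3 T i j k"
    show "\<exists>s\<in>subtrees T. i \<in> leaves s \<and> j \<in> leaves s \<and> k \<notin> leaves s"
    proof (intro bexI conjI)
      show "k \<notin> leaves (LCA T {i,j})"
      proof
        assume "k \<in> leaves (LCA T {i,j})"
        then have "descendant (LCA T {i,j,k}) (LCA T {i,j})" using A B by auto
        then show False using r desc_antisym unfolding rel3_def by blast
      qed
    qed (use A in auto)
  next
    assume "\<exists>s\<in>subtrees T. i \<in> leaves s \<and> j \<in> leaves s \<and> k \<notin> leaves s"
    then obtain s where s: "s \<in> subtrees T" "i \<in> leaves s" "j \<in> leaves s" "k \<notin> leaves s" by blast
    have "descendant (LCA T {i,j}) s" using A s by auto
    then have "k \<notin> leaves (LCA T {i,j})" using leaves_sub s(4) unfolding descendant_def by blast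
    moreover have "descendant (LCA T {i,j}) (LCA T {i,j,k})" using A B by auto
    ultimately show "rel3 T i j k" unfolding rel3_def using B by auto
  qed
qed

fun comb :: "'a rtree list \<Rightarrow> 'a rtree" where
  "comb [] = Node []"
| "comb [x] = x"
| "comb (x # y # zs) = Node [x, comb (y # zs)]"

fun bin :: "'a rtree \<Rightarrow> 'a rtree" where
  "bin (Leaf a) = Leaf a"
| "bin (Node ts) = comb (map bin ts)"

lemma comb_leaves: "leaves_list (comb xs) = concat (map leaves_list xs)"
  by (induction xs rule: comb.induct) auto

lemma bin_leaves: "leaves_list (bin t) = leaves_list t"
proof (induction t)
  case (Node ts)
  have "map leaves_list (map bin ts) = map leaves_list ts" using Node by auto
  then show ?case by (simp only: bin.simps comb_leaves leaves_list.simps)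
qed simp

lemma comb_ne: "xs \<noteq> [] \<Longrightarrow> \<forall>x\<in>set xs. no_empty_node x \<Longrightarrow> no_empty_node (comb xs)"
  by (induction xs rule: comb.induct) auto

lemma comb_bin: "xs \<noteq> [] \<Longrightarrow> \<forall>x\<in>set xs. is_binary x \<Longrightarrow> is_binary (comb xs)"
  by (induction xs rule: comb.induct) auto

lemma bin_ne: "no_empty_node t \<Longrightarrow> no_empty_node (bin t) \<and> is_binary (bin t)"
  by (induction t) (auto intro!: comb_ne comb_bin)

lemma comb_sub: "x \<in> set xs \<Longrightarrow> subtrees x \<subseteq> subtrees (comb xs)"
  by (induction xs rule: comb.induct) auto

lemma bin_clusters: "s \<in> subtrees t \<Longrightarrow> \<exists>s'\<in>subtrees (bin t). leaves s' = leaves s"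
proof (induction t)
  case (Leaf x) then show ?case by auto
next
  case (Node ts)
  show ?case
  proof (cases "s = Node ts")
    case True
    then show ?thesis using sub_self[of "bin (Node ts)"] bin_leaves[of "Node ts"]
      by (metis leaves_def)
  next
    case False
    then obtain c where c: "c \<in> set ts" "s \<in> subtrees c" using Node.prems by auto
    from Node.IH[OF c] obtain s' where "s' \<in> subtrees (bin c)" "leaves s' = leaves s" by blast
    moreover have "bin c \<in> set (map bin ts)" using c(1) by simp
    ultimately show ?thesis using comb_sub[of "bin c" "map bin ts"] by auto
  qed
qed


lemma rel3_sym: "rel3 T i j k = rel3 T j i k"
  unfolding rel3_def by (simp add: insert_commute)

lemma core:
  assumes "triplet_cost T w a b c = min (w a b + w a c) (min (w a b + w b c) (w a c + w b c))"
    "0 \<le> w a b" "0 \<le> w a c" "0 \<le> w b c"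
  shows "(w a b > w a c \<and> w a b > w b c \<longrightarrow> rel3 T a b c) \<and>
         (w a c > w a b \<and> w a c > w b c \<longrightarrow> rel3 T a c b) \<and>
         (w b c > w a b \<and> w b c > w a c \<longrightarrow> rel3 T b c a)"
  using assms unfolding triplet_cost_def by (auto split: if_splits simp: min_def)

lemma strict:
  fixes n :: nat
  assumes opt: "\<forall>a b c. a < b \<and> b < c \<and> c < n \<longrightarrow>
      triplet_cost T w a b c = min (w a b + w a c) (min (w a b + w b c) (w a c + w b c))"
    and nn: "\<forall>a<n. \<forall>b<n. 0 \<le> w a b \<and> w a b = w b a"
    and ijk: "i < n" "j < n" "k < n" "distinct [i,j,k]"
    and gt: "w i j > w i k" "w i j > w j k"
  shows "rel3 T i j k"
proof -
  have key: "\<And>a b c. a < b \<Longrightarrow> b < c \<Longrightarrow> c < n \<Longrightarrow>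
         (w a b > w a c \<and> w a b > w b c \<longrightarrow> rel3 T a b c) \<and>
         (w a c > w a b \<and> w a c > w b c \<longrightarrow> rel3 T a c b) \<and>
         (w b c > w a b \<and> w b c > w a c \<longrightarrow> rel3 T b c a)"
  proof -
    fix a b c assume h: "a < b" "b < c" "c < n"
    then have "a < n" "b < n" by auto
    then show "?thesis a b c" using h opt nn by (intro core) auto
  qed
  have r: "rel3 T j i k \<Longrightarrow> rel3 T i j k" using rel3_sym by metis
  have s: "w i j = w j i" "w i k = w k i" "w j k = w k j" using nn ijk by auto
  consider "i < j" "j < k" | "i < k" "k < j" | "j < i" "i < k" | "j < k" "k < i"
    | "k < i" "i < j" | "k < j" "j < i"
    using ijk(4) by (simp, linarith)
  then show ?thesis
  proof cases
    case 1 then show ?thesis using key[of i j k] ijk gt s by auto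
  next
    case 2 then show ?thesis using key[of i k j] ijk gt s by auto
  next
    case 3 then show ?thesis using key[of j i k] ijk gt s r by auto
  next
    case 4 then show ?thesis using key[of j k i] ijk gt s r by auto
  next
    case 5 then show ?thesis using key[of k i j] ijk gt s r by auto
  next
    case 6 then show ?thesis using key[of k j i] ijk gt s r by auto
  qed
qed

lemma finite_triples: "finite (triples n)"
proof -
  have "triples n \<subseteq> {..<n} \<times> {..<n} \<times> {..<n}" unfolding triples_def by auto
  then show ?thesis by (rule finite_subset) auto
qed

lemma cost_ge:
  assumes "0 \<le> w i j" "0 \<le> w i k" "0 \<le> w j k"
  shows "min (w i j + w i k) (min (w i j + w j k) (w i k + w j k)) \<le> triplet_cost T w i j k"
  using assms unfolding triplet_cost_def by (auto simp: min_def)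

lemma opt_tree:
  assumes "perfect_HC n w" and nn: "\<forall>a<n. \<forall>b<n. 0 \<le> w a b"
  shows "\<exists>T. hc_tree n T \<and> (\<forall>a b c. a < b \<and> b < c \<and> c < n \<longrightarrow>
      triplet_cost T w a b c = min (w a b + w a c) (min (w a b + w b c) (w a c + w b c)))"
proof -
  define A where "A = (\<lambda>T. rho n T w) ` {T. hc_tree n T}"
  define C where "C = (\<lambda>(i::nat,j::nat,k::nat). {w i k + w j k, w i j + w j k, w i j + w i k, w i j + w j k + w i k})"
  define F where "F = (\<lambda>g. \<Sum>p\<in>triples n. g p) ` PiE (triples n) C"
  have fF: "finite F" unfolding F_def
    by (intro finite_imageI finite_PiE finite_triples) (auto simp: C_def split: prod.splits)
  have TCF: "TC n T w \<in> F" for T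
  proof -
    define g where "g = restrict (\<lambda>(i,j,k). triplet_cost T w i j k) (triples n)"
    have "g \<in> PiE (triples n) C" unfolding g_def C_def triplet_cost_def by (auto split: prod.splits)
    moreover have "TC n T w = (\<Sum>p\<in>triples n. g p)" unfolding TC_def g_def
      by (rule sum.cong) auto
    ultimately show ?thesis unfolding F_def by blast
  qed
  have "A \<subseteq> {1, \<infinity>} \<union> (\<lambda>x. ereal (x / BC n w)) ` F"
    unfolding A_def rho_def using TCF by auto
  then have fA: "finite A" using fF by (meson finite_Un finite_imageI finite_insert finite.emptyI finite_subset)
  have "Inf A = 1" using assms(1) unfolding perfect_HC_def rho_star_def A_def by simp
  moreover have "A \<noteq> {}"
  proof
    assume "A = {}" then have "Inf A = \<infinity>" by (simp add: top_ereal_def)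
    with \<open>Inf A = 1\<close> show False by simp
  qed
  ultimately have "1 \<in> A" using fA cInf_eq_Min Min_in by metis
  then obtain T where T: "hc_tree n T" "rho n T w = 1" unfolding A_def by auto
  have eq: "TC n T w = BC n w" using T(2) unfolding rho_def by (auto split: if_splits)
  show ?thesis
  proof (intro exI conjI allI impI)
    show "hc_tree n T" by fact
    fix a b c assume abc: "a < b \<and> b < c \<and> c < n"
    let ?m = "\<lambda>(i,j,k). min (w i j + w i k) (min (w i j + w j k) (w i k + w j k))"
    let ?t = "\<lambda>(i,j,k). triplet_cost T w i j k"
    have le: "\<forall>p\<in>triples n. ?m p \<le> ?t p"
      using nn by (auto simp: triples_def intro!: cost_ge)
    show "triplet_cost T w a b c = min (w a b + w a c) (min (w a b + w b c) (w a c + w b c))"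
    proof (rule ccontr)
      assume ne: "\<not> ?thesis"
      have "(a,b,c) \<in> triples n" using abc by (auto simp: triples_def)
      moreover have "?m (a,b,c) \<le> ?t (a,b,c)" using le calculation by blast
      ultimately have "\<exists>p\<in>triples n. ?m p < ?t p" using ne by force
      then have "sum ?m (triples n) < sum ?t (triples n)"
        using sum_strict_mono_ex1[OF finite_triples le] by blast
      then show False using eq unfolding TC_def BC_def by simp
    qed
  qed
qed

theorem lemma6:
  fixes n :: nat and E :: "(nat \<times> nat) set" and w wstar :: "nat \<Rightarrow> nat \<Rightarrow> real" and \<delta> :: real
  assumes "\<delta> \<ge> 1"
    and "weighted_graph n E w" and "weighted_graph n E wstar"
    and "perturbation \<delta> E w wstar"
    and "perfect_HC n wstar"
  shows "\<exists>T. hc_tree n T \<and> is_binary T \<and>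
           (\<forall>i j k. i < n \<and> j < n \<and> k < n \<and> distinct [i, j, k] \<and>
               w i j > \<delta>\<^sup>2 * max (w i k) (w j k) \<longrightarrow> rel3 T i j k)"
proof -
  have nnw: "\<forall>a<n. \<forall>b<n. 0 \<le> w a b \<and> w a b = w b a \<and> ((a,b) \<notin> E \<longrightarrow> w a b = 0)"
    using assms(2) unfolding weighted_graph_def by metis
  have nns: "\<forall>a<n. \<forall>b<n. 0 \<le> wstar a b \<and> wstar a b = wstar b a \<and> ((a,b) \<notin> E \<longrightarrow> wstar a b = 0)"
    using assms(3) unfolding weighted_graph_def by metis
  have pert: "\<And>a b. (a,b) \<in> E \<Longrightarrow> w a b / \<delta> \<le> wstar a b \<and> wstar a b \<le> \<delta> * w a b"
    using assms(4) unfolding perturbation_def by auto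
  obtain T0 where T0: "hc_tree n T0" and opt: "\<forall>a b c. a < b \<and> b < c \<and> c < n \<longrightarrow>
      triplet_cost T0 wstar a b c = min (wstar a b + wstar a c) (min (wstar a b + wstar b c) (wstar a c + wstar b c))"
    using opt_tree[OF assms(5)] nns by blast
  define B where "B = bin T0"
  have wT0: "wft T0" using T0 unfolding hc_tree_def wft_def by auto
  have hB: "hc_tree n B" "is_binary B"
    using T0 bin_ne[of T0] bin_leaves[of T0] unfolding B_def hc_tree_def leaves_def by auto
  have wB: "wft B" using hB unfolding hc_tree_def wft_def by auto
  show ?thesis
  proof (intro exI conjI allI impI)
    show "hc_tree n B" "is_binary B" by (fact hB)+
    fix i j k assume a: "i < n \<and> j < n \<and> k < n \<and> distinct [i, j, k] \<and> w i j > \<delta>\<^sup>2 * max (w i k) (w j k)"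
    have d: "\<delta> > 0" using assms(1) by simp
    have "0 \<le> w i k" using nnw a by blast
    then have m0: "0 \<le> max (w i k) (w j k)" by linarith
    have "w i j > 0" using a m0 d by (smt (verit) mult_nonneg_nonneg zero_le_power)
    moreover have "(i,j) \<notin> E \<longrightarrow> w i j = 0" using nnw a by blast
    ultimately have "(i,j) \<in> E" by auto
    then have l1: "wstar i j \<ge> w i j / \<delta>" using pert by auto
    have b1: "wstar i k \<le> \<delta> * w i k"
    proof (cases "(i,k) \<in> E")
      case False then show ?thesis using nns nnw a d by auto
    qed (use pert in auto)
    have b2: "wstar j k \<le> \<delta> * w j k"
    proof (cases "(j,k) \<in> E")
      case False then show ?thesis using nns nnw a d by auto
    qed (use pert in auto)
    have "w i j / \<delta> > \<delta> * max (w i k) (w j k)"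
      using a d by (simp add: field_simps power2_eq_square)
    then have g1: "wstar i j > wstar i k" "wstar i j > wstar j k"
      using l1 b1 b2 d by (smt (verit) max.cobounded1 max.cobounded2 mult_left_mono)+
    have "rel3 T0 i j k" using strict[OF opt _ _ _ _ _ g1] nns a by auto
    then obtain s where s: "s \<in> subtrees T0" "i \<in> leaves s" "j \<in> leaves s" "k \<notin> leaves s"
      using rel3_iff[OF wT0] T0 a unfolding hc_tree_def by auto
    obtain s' where "s' \<in> subtrees B" "leaves s' = leaves s"
      using bin_clusters[OF s(1)] unfolding B_def by blast
    then show "rel3 B i j k" using rel3_iff[OF wB] hB a s unfolding hc_tree_def by auto
  qed
qed

end
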